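(* Let $\mathbb{K}$ be a field, $\mathbf{S}=(s_i)_{i\ge0}$ a sequence over $\mathbb{K}$ (with $s_i=0$ for $i<0$), and $\Theta(t)=t^{-1}\sum_{i\ge0}s_it^{-i}\in\mathbb{K}(\!(t^{-1})\!)$. For an integer $k\ge0$ write the continued fraction expansion $\langle t^k\Theta(t)\rangle=[0;A_1(t),A_2(t),\dots]$. Then the $k$-th diagonal $(\widetilde W(\mathbf{S})[m,k])_{m\ge0}$ of the number wall consists of successive blocks of zeros of lengths $\deg A_i-1$ separated by single nonzero entries. Explicitly, for $m\ge0$, $\widetilde W(\mathbf{S})[m,k]\ne0$ if and only if $m=\sum_{i=1}^{j}\deg A_i-1$ for some $j\ge1$.
   Context: $\langle\cdot\rangle$ denotes the fractional part of a Laurent series (removing all non-negative powers of $t$). Continued fraction partial quotients are polynomials of degree $\ge1$ after the zeroth. The number wall of $\mathbf{S}$: for $m\ge0$ and $n\in\mathbb{Z}$, $W(\mathbf{S})[m,n]=\det\big(s_{n-i+j}\big)_{0\le i,j\le m}$ (the determinant of the $(m+1)\times(m+1)$ Toeplitz matrix whose first row is $s_n,\dots,s_{n+m}$ and whose first column is $s_n,s_{n-1},\dots,s_{n-m}$); also $W[-1,n]=1$. The $k$-th diagonal entries are $\widetilde W(\mathbf{S})[m,k]:=W(\mathbf{S})[m,m+k]$. *)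

theory Defs
  imports "HOL-Computational_Algebra.Formal_Laurent_Series" "Jordan_Normal_Form.Determinant"
begin

text \<open>Laurent series in t^{-1} are modelled as formal Laurent series in the variable
  X = t^{-1} (type 'a fls); thus t = fls_X_inv.\<close>

definition tvar :: "'a::field fls" where
  "tvar = fls_X_inv"

definition Theta :: "(nat \<Rightarrow> 'a::field) \<Rightarrow> 'a fls" where
  "Theta s = fls_X * fps_to_fls (Abs_fps s)"

text \<open>Fractional part: remove all non-negative powers of t, i.e. keep X^n for n > 0.\<close>
definition frac_part :: "'a::field fls \<Rightarrow> 'a fls" where
  "frac_part f = Abs_fls (\<lambda>n. if 0 < n then fls_nth f n else 0)"

definition poly_part :: "'a::field fls \<Rightarrow> 'a poly" where
  "poly_part f = (\<Sum>j \<le> nat (- fls_subdegree f). monom (fls_nth f (- int j)) j)"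

text \<open>Continued fraction expansion [0; A_1, A_2, ...] of f with <f> = f:
  remainders x_0 = f, x_{i+1} = <1/x_i>, partial quotients A_{i+1} = polynomial part of 1/x_i
  (only meaningful while x_i is nonzero).\<close>
fun cf_rem :: "'a::field fls \<Rightarrow> nat \<Rightarrow> 'a fls" where
  "cf_rem f 0 = f"
| "cf_rem f (Suc i) = frac_part (inverse (cf_rem f i))"

definition cf_quot :: "'a::field fls \<Rightarrow> nat \<Rightarrow> 'a poly" where
  "cf_quot f i = poly_part (inverse (cf_rem f (i - 1)))"

definition cf_has_quot :: "'a::field fls \<Rightarrow> nat \<Rightarrow> bool" where
  "cf_has_quot f i \<longleftrightarrow> 1 \<le> i \<and> (\<forall>l < i. cf_rem f l \<noteq> 0)"

definition sext :: "(nat \<Rightarrow> 'a::zero) \<Rightarrow> int \<Rightarrow> 'a" where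
  "sext s i = (if i < 0 then 0 else s (nat i))"

definition number_wall :: "(nat \<Rightarrow> 'a::field) \<Rightarrow> nat \<Rightarrow> int \<Rightarrow> 'a" where
  "number_wall s m n = det (mat (Suc m) (Suc m) (\<lambda>(i, j). sext s (n - int i + int j)))"

definition wall_diag :: "(nat \<Rightarrow> 'a::field) \<Rightarrow> nat \<Rightarrow> nat \<Rightarrow> 'a" where
  "wall_diag s m k = number_wall s m (int m + int k)"

end

theory Submission
  imports Defs
begin

no_notation index_mat (infixl "$$" 100)
notation fls_nth (infixl "$$" 75)
no_notation fps_nth (infixl "$" 75)

lemma frac_part_nth [simp]: "frac_part f $$ i = (if 0 < i then f $$ i else 0)"
  unfolding frac_part_def by (rule nth_Abs_fls_lower_bound[of 1]) auto

definition vb :: "'a::field fls \<Rightarrow> int \<Rightarrow> bool" where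
  "vb X a \<longleftrightarrow> (\<forall>i<a. X $$ i = 0)"

definition np :: "'a::field fls \<Rightarrow> bool" where
  "np X \<longleftrightarrow> (\<forall>i>0. X $$ i = 0)"

definition EE :: "nat \<Rightarrow> 'a::field fls \<Rightarrow> bool" where
  "EE n f \<longleftrightarrow> (\<exists>Q. Q \<noteq> 0 \<and> np Q \<and> vb Q (1 - int n) \<and>
      (\<forall>i. 1 \<le> i \<and> i \<le> int n \<longrightarrow> (Q * f) $$ i = 0))"

lemma vb_mult: assumes "vb X a" "vb Y b" shows "vb (X * Y) (a + b)"
proof (cases "X = 0 \<or> Y = 0")
  case True then show ?thesis by (auto simp: vb_def)
next
  case False
  then have "a \<le> fls_subdegree X" "b \<le> fls_subdegree Y"
    using assms by (auto simp: vb_def intro!: fls_subdegree_geI)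
  then show ?thesis unfolding vb_def by (auto intro!: fls_times_nth_eq0)
qed

lemma vb_mono: "vb X a \<Longrightarrow> b \<le> a \<Longrightarrow> vb X b"
  by (auto simp: vb_def)

lemma vb_subdeg: "vb X (fls_subdegree X)"
  by (auto simp: vb_def)

lemma vb_subdeg_ge: "X \<noteq> 0 \<Longrightarrow> vb X a \<Longrightarrow> a \<le> fls_subdegree X"
  by (auto simp: vb_def intro!: fls_subdegree_geI)

lemma np_mult: assumes "np X" "np Y" shows "np (X * Y)"
  unfolding np_def
proof (intro allI impI)
  fix n :: int assume n: "n > 0"
  have "(X * Y) $$ n = (\<Sum>i=fls_subdegree X..n - fls_subdegree Y. X $$ i * Y $$ (n - i))"
    by (rule fls_times_nth(2))
  also have "\<dots> = 0"
  proof (rule sum.neutral, intro ballI)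
    fix i assume "i \<in> {fls_subdegree X..n - fls_subdegree Y}"
    show "X $$ i * Y $$ (n - i) = 0"
    proof (cases "i > 0")
      case True then show ?thesis using assms(1) by (simp add: np_def)
    next
      case False then have "n - i > 0" using n by simp
      then show ?thesis using assms(2) by (simp add: np_def)
    qed
  qed
  finally show "(X * Y) $$ n = 0" .
qed

lemma np_subdeg: "np X \<Longrightarrow> X \<noteq> 0 \<Longrightarrow> fls_subdegree X \<le> 0"
  unfolding np_def by (metis linorder_not_le nth_fls_subdegree_nonzero)

lemma np_1: "np 1" by (simp add: np_def)
lemma np_add: "np X \<Longrightarrow> np Y \<Longrightarrow> np (X + Y)" by (simp add: np_def)
lemma np_diff: "np X \<Longrightarrow> np Y \<Longrightarrow> np (X - Y)" by (simp add: np_def)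
lemma vb_add: "vb X a \<Longrightarrow> vb Y a \<Longrightarrow> vb (X + Y) a" by (simp add: vb_def)
lemma vb_diff: "vb X a \<Longrightarrow> vb Y a \<Longrightarrow> vb (X - Y) a" by (simp add: vb_def)


lemma EE_small:
  assumes fr: "vb f 1" and f0: "f \<noteq> 0" and n: "1 \<le> n" "int n < fls_subdegree f"
  shows "EE n f"
  unfolding EE_def
proof (intro exI[of _ 1] conjI allI impI)
  show "np 1" by (rule np_1)
  show "vb 1 (1 - int n)" using n by (auto simp: vb_def)
  fix i :: int assume "1 \<le> i \<and> i \<le> int n"
  then show "(1 * f) $$ i = 0" using n by simp
qed simp

lemma EE_eq:
  assumes fr: "vb f 1" and f0: "f \<noteq> 0" and n: "int n = fls_subdegree f"
  shows "\<not> EE n f"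
proof
  assume "EE n f"
  then obtain Q where Q: "Q \<noteq> 0" "np Q" "vb Q (1 - int n)"
    "\<And>i. 1 \<le> i \<Longrightarrow> i \<le> int n \<Longrightarrow> (Q * f) $$ i = 0"
    unfolding EE_def by blast
  have e: "fls_subdegree Q \<le> 0" using np_subdeg Q by blast
  have e2: "1 - int n \<le> fls_subdegree Q" using vb_subdeg_ge Q by blast
  have sd: "fls_subdegree (Q * f) = fls_subdegree Q + fls_subdegree f" using Q f0 by simp
  have "(Q * f) $$ fls_subdegree (Q * f) \<noteq> 0" using Q f0 by simp
  moreover have "(Q * f) $$ fls_subdegree (Q * f) = 0"
    using Q(4)[of "fls_subdegree (Q * f)"] sd e e2 n by simp
  ultimately show False by simp
qed


lemma EE_step:
  fixes f :: "'a::field fls"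
  assumes fr: "vb f 1" and f0: "f \<noteq> 0" and n: "fls_subdegree f < int n"
  shows "EE n f \<longleftrightarrow> EE (n - nat (fls_subdegree f)) (frac_part (inverse f))"
proof -
  define d where "d = fls_subdegree f"
  define h where "h = inverse f"
  define g where "g = frac_part h"
  define A where "A = h - g"
  have d1: "1 \<le> d" using vb_subdeg_ge[OF f0 fr] d_def by simp
  define n' where "n' = n - nat d"
  have n'n: "int n' = int n - d" using n d1 d_def n'_def by simp
  have hf: "h * f = 1" using f0 h_def by simp
  have h0: "h \<noteq> 0" using f0 h_def by simp
  have sdh: "fls_subdegree h = - d" using h_def d_def by simp
  have vbf: "vb f d" using d_def vb_subdeg by blast
  have vbg: "vb g 1" by (simp add: g_def vb_def)
  have npA: "np A" by (simp add: np_def A_def g_def)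
  have vbA: "vb A (- d)" using sdh d1 by (auto simp: vb_def A_def g_def)
  have Anz: "A $$ (- d) \<noteq> 0" using sdh d1 h0 A_def g_def
    by simp (metis nth_fls_subdegree_nonzero)
  have A0: "A \<noteq> 0" using Anz by auto
  have sdA: "fls_subdegree A = - d"
    using Anz vbA by (auto simp: vb_def intro!: fls_subdegree_eqI)
  show ?thesis
  proof
    assume "EE n f"
    then obtain Q where Q: "Q \<noteq> 0" "np Q" "vb Q (1 - int n)"
      "\<And>i. 1 \<le> i \<Longrightarrow> i \<le> int n \<Longrightarrow> (Q * f) $$ i = 0"
      unfolding EE_def by blast
    define R where "R = frac_part (Q * f)"
    define P where "P = Q * f - R"
    have vbR: "vb R (int n + 1)" using Q(4) by (auto simp: vb_def R_def)
    have npP: "np P" by (simp add: np_def P_def R_def)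
    have e: "fls_subdegree Q \<le> 0" using np_subdeg Q by blast
    have sd: "fls_subdegree (Q * f) = fls_subdegree Q + d" using Q f0 d_def by simp
    have P0: "P \<noteq> 0"
    proof
      assume "P = 0"
      then have "Q * f = R" by (simp add: P_def)
      then have "vb (Q * f) (int n + 1)" using vbR by simp
      moreover have "Q * f \<noteq> 0" using Q f0 by simp
      ultimately have "int n + 1 \<le> fls_subdegree (Q * f)" using vb_subdeg_ge by blast
      then show False using sd e n d_def by simp
    qed
    have vbQf: "vb (Q * f) (1 - int n + d)" using vb_mult[OF Q(3) vbf] by simp
    have vbP: "vb P (1 - int n')"
      using vbQf n'n by (auto simp: vb_def P_def R_def)
    have eq: "P * g = Q - R * h - P * A"
      using hf unfolding P_def A_def by (simp add: algebra_simps)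
    have vbRh: "vb (R * h) (int n + 1 - d)"
      using vb_mult[OF vbR, of h "- d"] sdh vb_subdeg[of h] by simp
    have "EE n' g" unfolding EE_def
    proof (intro exI[of _ P] conjI allI impI)
      fix i :: int assume i: "1 \<le> i \<and> i \<le> int n'"
      have "Q $$ i = 0" using Q(2) i by (simp add: np_def)
      moreover have "(R * h) $$ i = 0" using vbRh i n'n by (simp add: vb_def)
      moreover have "(P * A) $$ i = 0" using np_mult[OF npP npA] i by (simp add: np_def)
      ultimately show "(P * g) $$ i = 0" unfolding eq by simp
    qed (use P0 npP vbP in auto)
    then show "EE (n - nat (fls_subdegree f)) (frac_part (inverse f))"
      using n'_def d_def g_def h_def by simp
  next
    assume "EE (n - nat (fls_subdegree f)) (frac_part (inverse f))"
    then have "EE n' g" using n'_def d_def g_def h_def by simp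
    then obtain Q' where Q': "Q' \<noteq> 0" "np Q'" "vb Q' (1 - int n')"
      "\<And>i. 1 \<le> i \<Longrightarrow> i \<le> int n' \<Longrightarrow> (Q' * g) $$ i = 0"
      unfolding EE_def by blast
    define R where "R = frac_part (Q' * g)"
    define P where "P = Q' * g - R"
    define Q where "Q = P + Q' * A"
    have vbR: "vb R (int n' + 1)" using Q'(4) by (auto simp: vb_def R_def)
    have npP: "np P" by (simp add: np_def P_def R_def)
    have eq: "Q * f = Q' - R * f"
      using hf unfolding Q_def P_def A_def by (simp add: algebra_simps)
    have vbRf: "vb (R * f) (int n + 1)"
      using vb_mult[OF vbR vbf] n'n by simp
    have e: "fls_subdegree Q' \<le> 0" using np_subdeg Q' by blast
    have e2: "1 - int n' \<le> fls_subdegree Q'" using vb_subdeg_ge Q' by blast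
    have vbQg: "vb (Q' * g) (fls_subdegree Q' + 1)"
      using vb_mult[OF vb_subdeg[of Q'] vbg] .
    have vbP: "vb P (fls_subdegree Q' + 1)"
      using vbQg by (auto simp: vb_def P_def R_def)
    have vbQA: "vb (Q' * A) (fls_subdegree Q' - d)"
      using vb_mult[OF vb_subdeg[of Q'] vbA] by simp
    have "Q $$ (fls_subdegree Q' - d) \<noteq> 0"
    proof -
      have "P $$ (fls_subdegree Q' - d) = 0" using vbP d1 by (simp add: vb_def)
      moreover have "(Q' * A) $$ (fls_subdegree Q' - d) \<noteq> 0"
        using nth_fls_subdegree_nonzero[of "Q' * A"] Q'(1) A0 sdA by simp
      ultimately show ?thesis by (simp add: Q_def)
    qed
    then have Q0: "Q \<noteq> 0" by auto
    have "EE n f" unfolding EE_def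
    proof (intro exI[of _ Q] conjI allI impI)
      show "np Q" unfolding Q_def by (intro np_add npP np_mult Q'(2) npA)
      show "vb Q (1 - int n)" unfolding Q_def
        by (intro vb_add; rule vb_mono) (use vbP vbQA e2 n'n d1 in auto)
      fix i :: int assume i: "1 \<le> i \<and> i \<le> int n"
      then show "(Q * f) $$ i = 0" unfolding eq using Q'(2) vbRf
        by (simp add: np_def vb_def)
    qed (use Q0 in auto)
    then show "EE n f" .
  qed
qed


lemma cf_rem_Suc': "cf_rem f (Suc l) = cf_rem (frac_part (inverse f)) l"
  by (induction l) auto

lemma cf_quot_Suc': "1 \<le> i \<Longrightarrow> cf_quot f (Suc i) = cf_quot (frac_part (inverse f)) i"
  unfolding cf_quot_def using cf_rem_Suc'[of f "i - 1"] by simp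

lemma degree_poly_part:
  fixes h :: "'a::field fls"
  assumes h0: "h \<noteq> 0" and sd: "fls_subdegree h \<le> 0"
  shows "degree (poly_part h) = nat (- fls_subdegree h)"
proof -
  define N where "N = nat (- fls_subdegree h)"
  have c: "coeff (poly_part h) i = (if i \<le> N then h $$ (- int i) else 0)" for i
    unfolding poly_part_def N_def[symmetric] coeff_sum coeff_monom
    by (simp add: sum.delta)
  have "coeff (poly_part h) N \<noteq> 0" unfolding c using h0 sd N_def by simp
  then have "N \<le> degree (poly_part h)" by (rule le_degree)
  moreover have "degree (poly_part h) \<le> N" by (rule degree_le) (simp add: c)
  ultimately show ?thesis using N_def by simp
qed

lemma degree_cf_quot1:
  fixes f :: "'a::field fls"
  assumes "f \<noteq> 0" "vb f 1"
  shows "degree (cf_quot f 1) = nat (fls_subdegree f)"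
proof -
  have "1 \<le> fls_subdegree f" using vb_subdeg_ge assms by blast
  then show ?thesis unfolding cf_quot_def using assms
    by (subst degree_poly_part) auto
qed

lemma main_cf:
  fixes f :: "'a::field fls"
  assumes "vb f 1" "1 \<le> n"
  shows "EE n f \<longleftrightarrow> \<not> (\<exists>j\<ge>1. (\<forall>l<j. cf_rem f l \<noteq> 0) \<and> n = (\<Sum>i=1..j. degree (cf_quot f i)))"
  using assms
proof (induction n arbitrary: f rule: less_induct)
  case (less n f)
  show ?case
  proof (cases "f = 0")
    case True
    have "EE n f" unfolding EE_def
      by (rule exI[of _ 1]) (use True less.prems in \<open>auto simp: np_def vb_def\<close>)
    moreover have "\<not> (\<exists>j\<ge>1. (\<forall>l<j. cf_rem f l \<noteq> 0) \<and> n = (\<Sum>i=1..j. degree (cf_quot f i)))"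
      using True by force
    ultimately show ?thesis by simp
  next
    case f0: False
    define d where "d = fls_subdegree f"
    have d1: "1 \<le> d" using vb_subdeg_ge[OF f0 less.prems(1)] d_def by simp
    have dq: "degree (cf_quot f 1) = nat d" using degree_cf_quot1[OF f0 less.prems(1)] d_def by simp
    have sum_ge: "nat d \<le> (\<Sum>i=1..j. degree (cf_quot f i))" if "1 \<le> j" for j
      using member_le_sum[of 1 "{1..j}" "\<lambda>i. degree (cf_quot f i)"] that dq by simp
    consider "int n < d" | "int n = d" | "d < int n" by linarith
    then show ?thesis
    proof cases
      case 1
      have "EE n f" using EE_small[OF less.prems(1) f0 less.prems(2)] 1 d_def by simp
      moreover have "\<not> (\<exists>j\<ge>1. (\<forall>l<j. cf_rem f l \<noteq> 0) \<and> n = (\<Sum>i=1..j. degree (cf_quot f i)))"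
      proof
        assume "\<exists>j\<ge>1. (\<forall>l<j. cf_rem f l \<noteq> 0) \<and> n = (\<Sum>i=1..j. degree (cf_quot f i))"
        then obtain j where "1 \<le> j" "n = (\<Sum>i=1..j. degree (cf_quot f i))" by blast
        then have "nat d \<le> n" using sum_ge by simp
        then show False using 1 by simp
      qed
      ultimately show ?thesis by simp
    next
      case 2
      have "\<not> EE n f" using EE_eq[OF less.prems(1) f0] 2 d_def by simp
      moreover have "(\<forall>l<1. cf_rem f l \<noteq> 0) \<and> n = (\<Sum>i=1..1. degree (cf_quot f i))"
        using f0 dq 2 by simp
      ultimately show ?thesis by blast
    next
      case 3
      define g where "g = frac_part (inverse f)"
      define n' where "n' = n - nat d"
      have n'1: "1 \<le> n'" "n' < n" using 3 d1 n'_def by auto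
      have vbg: "vb g 1" by (simp add: g_def vb_def)
      have "EE n f \<longleftrightarrow> EE n' g" using EE_step[OF less.prems(1) f0] 3 d_def n'_def g_def by simp
      also have "\<dots> \<longleftrightarrow> \<not> (\<exists>j\<ge>1. (\<forall>l<j. cf_rem g l \<noteq> 0) \<and> n' = (\<Sum>i=1..j. degree (cf_quot g i)))"
        using less.IH[OF n'1(2) vbg n'1(1)] .
      also have "(\<exists>j\<ge>1. (\<forall>l<j. cf_rem g l \<noteq> 0) \<and> n' = (\<Sum>i=1..j. degree (cf_quot g i)))
          \<longleftrightarrow> (\<exists>j\<ge>1. (\<forall>l<j. cf_rem f l \<noteq> 0) \<and> n = (\<Sum>i=1..j. degree (cf_quot f i)))"
      proof
        assume "\<exists>j\<ge>1. (\<forall>l<j. cf_rem g l \<noteq> 0) \<and> n' = (\<Sum>i=1..j. degree (cf_quot g i))"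
        then obtain j where j: "1 \<le> j" "\<forall>l<j. cf_rem g l \<noteq> 0" "n' = (\<Sum>i=1..j. degree (cf_quot g i))"
          by blast
        have "\<forall>l<Suc j. cf_rem f l \<noteq> 0"
        proof (intro allI impI)
          fix l assume "l < Suc j"
          then show "cf_rem f l \<noteq> 0" using j(2) f0 g_def cf_rem_Suc'[of f] by (cases l) auto
        qed
        moreover have "(\<Sum>i=1..Suc j. degree (cf_quot f i)) = nat d + (\<Sum>i=1..j. degree (cf_quot g i))"
        proof -
          have "(\<Sum>i=1..Suc j. degree (cf_quot f i)) = degree (cf_quot f 1) + (\<Sum>i=Suc 1..Suc j. degree (cf_quot f i))"
            by (simp add: sum.atLeast_Suc_atMost)
          also have "(\<Sum>i=Suc 1..Suc j. degree (cf_quot f i)) = (\<Sum>i=1..j. degree (cf_quot f (Suc i)))"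
            by (rule sum.shift_bounds_cl_Suc_ivl)
          also have "\<dots> = (\<Sum>i=1..j. degree (cf_quot g i))"
            using g_def by (intro sum.cong) (auto simp: cf_quot_Suc')
          finally show ?thesis using dq by simp
        qed
        ultimately show "\<exists>j\<ge>1. (\<forall>l<j. cf_rem f l \<noteq> 0) \<and> n = (\<Sum>i=1..j. degree (cf_quot f i))"
          using j(3) n'_def 3 by (intro exI[of _ "Suc j"]) auto
      next
        assume "\<exists>j\<ge>1. (\<forall>l<j. cf_rem f l \<noteq> 0) \<and> n = (\<Sum>i=1..j. degree (cf_quot f i))"
        then obtain j where j: "1 \<le> j" "\<forall>l<j. cf_rem f l \<noteq> 0" "n = (\<Sum>i=1..j. degree (cf_quot f i))"
          by blast
        have "j \<noteq> 1" using j(3) dq 3 d1 by (auto split: if_splits)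
        then obtain j' where j': "j = Suc j'" "1 \<le> j'" using j(1) by (cases j) auto
        have "\<forall>l<j'. cf_rem g l \<noteq> 0" using j(2) j'(1) g_def cf_rem_Suc'[of f] by auto
        moreover have "(\<Sum>i=1..Suc j'. degree (cf_quot f i)) = nat d + (\<Sum>i=1..j'. degree (cf_quot g i))"
        proof -
          have "(\<Sum>i=1..Suc j'. degree (cf_quot f i)) = degree (cf_quot f 1) + (\<Sum>i=Suc 1..Suc j'. degree (cf_quot f i))"
            by (simp add: sum.atLeast_Suc_atMost)
          also have "(\<Sum>i=Suc 1..Suc j'. degree (cf_quot f i)) = (\<Sum>i=1..j'. degree (cf_quot f (Suc i)))"
            by (rule sum.shift_bounds_cl_Suc_ivl)
          also have "\<dots> = (\<Sum>i=1..j'. degree (cf_quot g i))"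
            using g_def by (intro sum.cong) (auto simp: cf_quot_Suc')
          finally show ?thesis using dq by simp
        qed
        ultimately show "\<exists>j\<ge>1. (\<forall>l<j. cf_rem g l \<noteq> 0) \<and> n' = (\<Sum>i=1..j. degree (cf_quot g i))"
          using j(3) j' n'_def by (intro exI[of _ j']) auto
      qed
      finally show ?thesis .
    qed
  qed
qed


lemma F_nth:
  "frac_part (tvar ^ k * Theta s) $$ i = (if 0 < i then s (nat (i + int k - 1)) else 0)"
  unfolding tvar_def Theta_def
  by (simp add: fls_X_inv_power_times_conv_shift fls_X_times_conv_shift mult.assoc[symmetric] add_diff_eq)

lemma sum_poly_nth:
  "(\<Sum>j<n. fls_const (a j) * fls_X_inv ^ j) $$ i = (if - int n < i \<and> i \<le> 0 then a (nat (- i)) else (0::'a::field))"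
proof -
  have "(\<Sum>j<n. fls_const (a j) * fls_X_inv ^ j) $$ i = (\<Sum>j<n. if i = - int j then a j else 0)"
    by (auto simp: fls_nth_sum intro!: sum.cong)
  also have "\<dots> = (\<Sum>j\<in>{..<n} \<inter> {j. i = - int j}. a j)"
    by (simp add: sum.inter_restrict)
  also have "\<dots> = (if - int n < i \<and> i \<le> 0 then a (nat (- i)) else 0)"
  proof (cases "- int n < i \<and> i \<le> 0")
    case True
    then have "{..<n} \<inter> {j. i = - int j} = {nat (- i)}" by auto
    then show ?thesis using True by simp
  next
    case False
    then have "{..<n} \<inter> {j. i = - int j} = {}" by auto
    then show ?thesis by (subst if_not_P[OF False]) simp
  qed
  finally show ?thesis .
qed

lemma sum_poly_mult_nth:
  "((\<Sum>j<n. fls_const (a j) * fls_X_inv ^ j) * F) $$ t = (\<Sum>j<n. a j * F $$ (t + int j))"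
proof -
  have e: "fls_const (a j) * fls_X_inv ^ j * F = fls_const (a j) * fls_shift (int j) F" for j
    by (metis mult.assoc fls_X_inv_power_times_conv_shift(1))
  have "((\<Sum>j<n. fls_const (a j) * fls_X_inv ^ j) * F) $$ t
      = (\<Sum>j<n. (fls_const (a j) * fls_X_inv ^ j * F) $$ t)"
    by (simp only: sum_distrib_right fls_nth_sum)
  also have "\<dots> = (\<Sum>j<n. a j * F $$ (t + int j))"
    unfolding e by (simp only: fls_mult_const_nth fls_shift_nth)
  finally show ?thesis .
qed

lemma Q_decomp:
  fixes Q :: "'a::field fls"
  assumes "np Q" "vb Q (1 - int n)"
  shows "Q = (\<Sum>j<n. fls_const (Q $$ (- int j)) * fls_X_inv ^ j)"
proof (rule fls_eqI)
  fix i
  show "Q $$ i = (\<Sum>j<n. fls_const (Q $$ (- int j)) * fls_X_inv ^ j) $$ i"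
    unfolding sum_poly_nth using assms by (auto simp: np_def vb_def)
qed

lemma det_EE:
  fixes s :: "nat \<Rightarrow> 'a::field" and m k :: nat
  defines "H \<equiv> mat (Suc m) (Suc m) (\<lambda>(i, j). sext s (int m + int k - int i + int j))"
  defines "F \<equiv> frac_part (tvar ^ k * Theta s)"
  shows "det H = 0 \<longleftrightarrow> EE (Suc m) F"
proof -
  have HC: "H \<in> carrier_mat (Suc m) (Suc m)" unfolding H_def by simp
  have Fn: "F $$ i = (if 0 < i then s (nat (i + int k - 1)) else 0)" for i
    unfolding F_def by (rule F_nth)
  have row: "(H *\<^sub>v w) $ i = (\<Sum>j<Suc m. w $ j * F $$ (int (Suc m - i) + int j))"
    if "i < Suc m" "w \<in> carrier_vec (Suc m)" for i w
  proof -
    have "(H *\<^sub>v w) $ i = (\<Sum>j<Suc m. index_mat H (i, j) * w $ j)"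
      using that HC by (simp add: scalar_prod_def lessThan_atLeast0)
    also have "\<dots> = (\<Sum>j<Suc m. w $ j * F $$ (int (Suc m - i) + int j))"
      using that by (intro sum.cong) (auto simp: H_def Fn sext_def of_nat_diff algebra_simps)
    finally show ?thesis .
  qed
  show ?thesis
  proof
    assume "det H = 0"
    then obtain v where v: "v \<in> carrier_vec (Suc m)" "v \<noteq> 0\<^sub>v (Suc m)" "H *\<^sub>v v = 0\<^sub>v (Suc m)"
      using det_0_iff_vec_prod_zero_field[OF HC] by blast
    define Q where "Q = (\<Sum>j<Suc m. fls_const (v $ j) * fls_X_inv ^ j)"
    have Qn: "Q $$ i = (if - int (Suc m) < i \<and> i \<le> 0 then v $ (nat (- i)) else 0)" for i
      unfolding Q_def by (rule sum_poly_nth)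
    obtain j where j: "j < Suc m" "v $ j \<noteq> 0" using v(1,2) by (auto simp: vec_eq_iff)
    have "Q $$ (- int j) \<noteq> 0" using j Qn by simp
    then have Q0: "Q \<noteq> 0" by auto
    show "EE (Suc m) F" unfolding EE_def
    proof (intro exI[of _ Q] conjI allI impI)
      show "np Q" by (simp add: np_def Qn)
      show "vb Q (1 - int (Suc m))" by (simp add: vb_def Qn)
      fix t :: int assume t: "1 \<le> t \<and> t \<le> int (Suc m)"
      define i where "i = Suc m - nat t"
      have i: "i < Suc m" "int (Suc m - i) = t" using t i_def by auto
      have "(Q * F) $$ t = (\<Sum>j<Suc m. v $ j * F $$ (t + int j))"
        unfolding Q_def by (rule sum_poly_mult_nth)
      also have "\<dots> = (H *\<^sub>v v) $ i" using row[OF i(1) v(1)] i(2) by simp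
      also have "\<dots> = 0" using v(3) i(1) by simp
      finally show "(Q * F) $$ t = 0" .
    qed (use Q0 in auto)
  next
    assume "EE (Suc m) F"
    then obtain Q where Q: "Q \<noteq> 0" "np Q" "vb Q (1 - int (Suc m))"
      "\<And>i. 1 \<le> i \<Longrightarrow> i \<le> int (Suc m) \<Longrightarrow> (Q * F) $$ i = 0"
      unfolding EE_def by blast
    define v where "v = vec (Suc m) (\<lambda>j. Q $$ (- int j))"
    have vC: "v \<in> carrier_vec (Suc m)" by (simp add: v_def)
    have e: "fls_subdegree Q \<le> 0" using np_subdeg Q by blast
    have e2: "1 - int (Suc m) \<le> fls_subdegree Q" using vb_subdeg_ge Q by blast
    have "- int (nat (- fls_subdegree Q)) = fls_subdegree Q" using e by simp
    then have "v $ nat (- fls_subdegree Q) \<noteq> 0" using e e2 Q(1) by (simp add: v_def)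
    moreover have "nat (- fls_subdegree Q) < Suc m" using e2 by simp
    ultimately have v0: "v \<noteq> 0\<^sub>v (Suc m)" by (auto simp: vec_eq_iff)
    have "H *\<^sub>v v = 0\<^sub>v (Suc m)"
    proof (rule eq_vecI)
      show "dim_vec (H *\<^sub>v v) = dim_vec (0\<^sub>v (Suc m))" using HC by simp
      fix i assume "i < dim_vec (0\<^sub>v (Suc m))"
      then have i: "i < Suc m" by simp
      have "(H *\<^sub>v v) $ i = (\<Sum>j<Suc m. v $ j * F $$ (int (Suc m - i) + int j))"
        using row[OF i vC] .
      also have "\<dots> = (\<Sum>j<Suc m. Q $$ (- int j) * F $$ (int (Suc m - i) + int j))"
        by (intro sum.cong) (auto simp: v_def)
      also have "\<dots> = (Q * F) $$ int (Suc m - i)"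
        using sum_poly_mult_nth[of "\<lambda>j. Q $$ (- int j)" "Suc m" F] Q_decomp[OF Q(2,3)] by simp
      also have "\<dots> = 0" using Q(4) i by simp
      finally show "(H *\<^sub>v v) $ i = 0\<^sub>v (Suc m) $ i" using i by simp
    qed
    then show "det H = 0" using det_0_iff_vec_prod_zero_field[OF HC] vC v0 by blast
  qed
qed


theorem lemma4p2:
  fixes s :: "nat \<Rightarrow> 'a::field" and k m :: nat
  shows "wall_diag s m k \<noteq> 0 \<longleftrightarrow>
    (\<exists>j \<ge> 1. cf_has_quot (frac_part (tvar ^ k * Theta s)) j \<and>
       m = (\<Sum>i = 1..j. degree (cf_quot (frac_part (tvar ^ k * Theta s)) i)) - 1)"
proof -
  define F where "F = frac_part (tvar ^ k * Theta s)"
  have vbF: "vb F 1" by (simp add: F_def vb_def)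
  have "wall_diag s m k = det (mat (Suc m) (Suc m) (\<lambda>(i, j). sext s (int m + int k - int i + int j)))"
    by (simp add: wall_diag_def number_wall_def)
  then have "wall_diag s m k \<noteq> 0 \<longleftrightarrow> \<not> EE (Suc m) F"
    using det_EE[where s=s and m=m and k=k] F_def by simp
  also have "\<dots> \<longleftrightarrow> (\<exists>j\<ge>1. (\<forall>l<j. cf_rem F l \<noteq> 0) \<and> Suc m = (\<Sum>i=1..j. degree (cf_quot F i)))"
    using main_cf[OF vbF, of "Suc m"] by simp
  also have "\<dots> \<longleftrightarrow> (\<exists>j \<ge> 1. cf_has_quot F j \<and> m = (\<Sum>i = 1..j. degree (cf_quot F i)) - 1)"
  proof -
    have "Suc m = (\<Sum>i=1..j. degree (cf_quot F i)) \<longleftrightarrow> m = (\<Sum>i = 1..j. degree (cf_quot F i)) - 1"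
      if j: "1 \<le> j" "\<forall>l<j. cf_rem F l \<noteq> 0" for j
    proof -
      have F0: "F \<noteq> 0" using j by force
      have "1 \<le> fls_subdegree F" using vb_subdeg_ge[OF F0 vbF] .
      then have "1 \<le> degree (cf_quot F 1)" using degree_cf_quot1[OF F0 vbF] by simp
      also have "\<dots> \<le> (\<Sum>i=1..j. degree (cf_quot F i))"
        using member_le_sum[of 1 "{1..j}" "\<lambda>i. degree (cf_quot F i)"] j by simp
      finally show ?thesis by auto
    qed
    then show ?thesis unfolding cf_has_quot_def by blast
  qed
  finally show ?thesis unfolding F_def .
qed

end
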